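(* Let $A, B, C, D \in \mathrm{SL}(2,\mathbb{R})$ and for integers $k, \ell$ let $M_{k,\ell} = D^\ell C B^k A$. Suppose $\mathrm{Tr}(B) = \mathrm{Tr}(D)$. Then for all integers $k \ge 3$, $$\mathrm{Tr}(M_{k,k}) = (\mathrm{Tr}(B)^2 - 1)\big(\mathrm{Tr}(M_{k-1,k-1}) - \mathrm{Tr}(M_{k-2,k-2})\big) + \mathrm{Tr}(M_{k-3,k-3}).$$ *)

theory Defs
  imports "HOL-Analysis.Analysis"
begin

primrec matpow :: "'a::semiring_1^'n^'n \<Rightarrow> nat \<Rightarrow> 'a^'n^'n" where
  "matpow A 0 = mat 1"
| "matpow A (Suc n) = A ** matpow A n"

definition SL2 :: "(real^2^2) set" where
  "SL2 = {A. det A = 1}"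

definition Mkl :: "real^2^2 \<Rightarrow> real^2^2 \<Rightarrow> real^2^2 \<Rightarrow> real^2^2 \<Rightarrow> nat \<Rightarrow> nat \<Rightarrow> real^2^2" where
  "Mkl A B C D k l = matpow D l ** C ** matpow B k ** A"

end

theory Submission
  imports Defs
begin

lemma ch2:
  fixes B :: "real^2^2"
  assumes "det B = 1"
  shows "B ** B = trace B *\<^sub>R B - mat 1"
  using assms
  by (simp add: vec_eq_iff forall_2 det_2 trace_def matrix_matrix_mult_def sum_2 mat_def algebra_simps)

lemma matpow_add: "matpow B (m + j) = matpow B j ** matpow B m"
  by (induction j) (simp_all add: matrix_mul_assoc)

lemma key:
  fixes D X B Y :: "real^2^2"
  shows "trace ((a1 *\<^sub>R D + b1 *\<^sub>R mat 1) ** X ** (a2 *\<^sub>R B + b2 *\<^sub>R mat 1) ** Y)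
    = a1*a2 * trace (D ** X ** B ** Y) + a1*b2 * trace (D ** X ** Y)
      + b1*a2 * trace (X ** B ** Y) + b1*b2 * trace (X ** Y)"
  by (simp add: trace_def matrix_matrix_mult_def sum_2 mat_def algebra_simps)


lemma Mkl_form:
  assumes "matpow D j = a1 *\<^sub>R D + b1 *\<^sub>R mat 1" "matpow B j = a2 *\<^sub>R B + b2 *\<^sub>R mat 1"
  shows "trace (Mkl A B C D (m+j) (m+j)) =
      a1*a2 * trace (D ** (matpow D m ** C) ** B ** (matpow B m ** A))
    + a1*b2 * trace (D ** (matpow D m ** C) ** (matpow B m ** A))
    + b1*a2 * trace ((matpow D m ** C) ** B ** (matpow B m ** A))
    + b1*b2 * trace ((matpow D m ** C) ** (matpow B m ** A))"
proof -
  have "Mkl A B C D (m+j) (m+j) = matpow D j ** (matpow D m ** C) ** matpow B j ** (matpow B m ** A)"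
    unfolding Mkl_def matpow_add by (simp add: matrix_mul_assoc)
  then show ?thesis using key[of a1 D b1 "matpow D m ** C" a2 B b2 "matpow B m ** A"] assms by simp
qed

lemma pows:
  fixes B :: "real^2^2"
  assumes "det B = 1"
  shows "matpow B 0 = 0 *\<^sub>R B + 1 *\<^sub>R mat 1"
    "matpow B 1 = 1 *\<^sub>R B + 0 *\<^sub>R mat 1"
    "matpow B 2 = trace B *\<^sub>R B + (-1) *\<^sub>R mat 1"
    "matpow B 3 = ((trace B)^2 - 1) *\<^sub>R B + (- trace B) *\<^sub>R mat 1"
proof -
  have e: "B ** B = trace B *\<^sub>R B - mat 1" using ch2 assms by blast
  show "matpow B 0 = 0 *\<^sub>R B + 1 *\<^sub>R mat 1" by simp
  show "matpow B 1 = 1 *\<^sub>R B + 0 *\<^sub>R mat 1" by simp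
  show "matpow B 2 = trace B *\<^sub>R B + (-1) *\<^sub>R mat 1"
    using e by (simp add: numeral_2_eq_2)
  have "matpow B 3 = B ** (B ** B)" by (simp add: numeral_3_eq_3)
  also have "\<dots> = B ** (trace B *\<^sub>R B - mat 1)" by (simp only: e)
  also have "\<dots> = trace B *\<^sub>R (B ** B) - B"
    by (simp add: vec_eq_iff forall_2 matrix_matrix_mult_def sum_2 mat_def algebra_simps)
  also have "\<dots> = ((trace B)^2 - 1) *\<^sub>R B + (- trace B) *\<^sub>R mat 1"
    by (simp add: e algebra_simps power2_eq_square scaleR_diff_right)
  finally show "matpow B 3 = ((trace B)^2 - 1) *\<^sub>R B + (- trace B) *\<^sub>R mat 1" .
qed

theorem lemma2p3:
  fixes A B C D :: "real^2^2" and k :: nat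
  assumes "A \<in> SL2" and "B \<in> SL2" and "C \<in> SL2" and "D \<in> SL2"
    and "trace B = trace D"
    and "k \<ge> 3"
  shows "trace (Mkl A B C D k k) =
    ((trace B)^2 - 1) * (trace (Mkl A B C D (k-1) (k-1)) - trace (Mkl A B C D (k-2) (k-2)))
    + trace (Mkl A B C D (k-3) (k-3))"
proof -
  obtain m where k: "k = m + 3" using assms(6) by (metis add.commute le_iff_add)
  have dB: "det B = 1" and dD: "det D = 1" using assms by (auto simp: SL2_def)
  note pB = pows[OF dB] and pD = pows[OF dD]
  have "k - 1 = m + 2" "k - 2 = m + 1" "k - 3 = m + 0" using k by auto
  then have G: "?thesis = (trace (Mkl A B C D (m+3) (m+3)) =
    ((trace B)^2 - 1) * (trace (Mkl A B C D (m+2) (m+2)) - trace (Mkl A B C D (m+1) (m+1)))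
    + trace (Mkl A B C D (m+0) (m+0)))" using k by simp
  show ?thesis unfolding G
    using Mkl_form[OF pD(4) pB(4), of A C m] Mkl_form[OF pD(3) pB(3), of A C m]
      Mkl_form[OF pD(2) pB(2), of A C m] Mkl_form[OF pD(1) pB(1), of A C m] 
    apply (simp only: assms(5))
    apply (simp add: algebra_simps power2_eq_square)
    done
qed

end
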